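(* Let $r>0$ and $k\geq1$ be an integer. Let $\mathcal N=(G,\beta,r)$ be a multi-path network of length $k$ (nodes $v_0,\dots,v_k$, every arc joins two consecutive nodes $v_{i-1},v_i$), and let $s=v_0$, $t=v_k$. Let $(\pi,f)$ be a potential-based $(s,t)$-flow of value $d>0$ in $\mathcal N$. If $\pi\in[0,\bar\pi]^V$ for some $\bar\pi>0$, then $$U^{\mathcal N}_{s,t}\geq \frac{d}{\sqrt[r]{\bar\pi}}.$$
   Context: A potential-based flow network $\mathcal N=(G,\beta,r)$ consists of a weakly connected directed multigraph $G=(V,A)$ without loops, resistances $\beta\in\mathbb{R}^A_{>0}$ and a degree $r>0$. For a balanced vector $b\in\mathbb{R}^V$ (i.e. $\sum_v b_v=0$), a potential-based $b$-transshipment is a pair $(\pi,f)\in\mathbb{R}^V\times\mathbb{R}^A$ with $\pi_u-\pi_v=\beta_a\,\mathrm{sign}(f_a)|f_a|^r$ for every arc $a=(u,v)$ and $\sum_{a\in\delta^+(v)}f_a-\sum_{a\in\delta^-(v)}f_a=b_v$ for all $v\in V$ ($\delta^+(v)$, $\delta^-(v)$: arcs leaving, resp. entering, $v$). A potential-based $(s,t)$-flow of value $d$ is a potential-based $b$-transshipment with $b=d(\chi_s-\chi_t)$, $\chi_v$ the unit vector of $v$. Such pairs exist for every balanced $b$ and are unique up to adding a constant to $\pi$; let $\pi^{\mathcal N}(b)$ be the potential normalized to have minimum entry $0$. The effective resistance is $R^{\mathcal N}_{s,t}=\pi^{\mathcal N}_s(\chi_s-\chi_t)-\pi^{\mathcal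 N}_t(\chi_s-\chi_t)$ and the effective conductance is $U^{\mathcal N}_{s,t}=(R^{\mathcal N}_{s,t})^{-1/r}$. *)

theory Defs
  imports Complex_Main
begin

text \<open>A potential-based flow network: vertex set V, arc set A of a directed multigraph
  (arc a goes from tail a to head a), resistances beta, degree r.\<close>

definition pb_network ::
  "'v set \<Rightarrow> 'e set \<Rightarrow> ('e \<Rightarrow> 'v) \<Rightarrow> ('e \<Rightarrow> 'v) \<Rightarrow> ('e \<Rightarrow> real) \<Rightarrow> real \<Rightarrow> bool" where
  "pb_network V A tail head beta r \<longleftrightarrow>
     finite V \<and> V \<noteq> {} \<and> finite A \<and>
     (\<forall>a\<in>A. tail a \<in> V \<and> head a \<in> V \<and> tail a \<noteq> head a) \<and>
     (\<forall>a\<in>A. beta a > 0) \<and> r > 0 \<and>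
     (\<forall>u\<in>V. \<forall>v\<in>V. (u, v) \<in> ({(tail a, head a) | a. a \<in> A} \<union> {(head a, tail a) | a. a \<in> A})\<^sup>*)"

definition balanced :: "'v set \<Rightarrow> ('v \<Rightarrow> real) \<Rightarrow> bool" where
  "balanced V b \<longleftrightarrow> (\<Sum>v\<in>V. b v) = 0"

definition pb_transshipment ::
  "'v set \<Rightarrow> 'e set \<Rightarrow> ('e \<Rightarrow> 'v) \<Rightarrow> ('e \<Rightarrow> 'v) \<Rightarrow> ('e \<Rightarrow> real) \<Rightarrow> real
    \<Rightarrow> ('v \<Rightarrow> real) \<Rightarrow> ('v \<Rightarrow> real) \<Rightarrow> ('e \<Rightarrow> real) \<Rightarrow> bool" where
  "pb_transshipment V A tail head beta r b p f \<longleftrightarrow>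
     (\<forall>a\<in>A. p (tail a) - p (head a) = beta a * (sgn (f a) * \<bar>f a\<bar> powr r)) \<and>
     (\<forall>v\<in>V. (\<Sum>a\<in>{a\<in>A. tail a = v}. f a) - (\<Sum>a\<in>{a\<in>A. head a = v}. f a) = b v)"

definition st_demand :: "'v \<Rightarrow> 'v \<Rightarrow> real \<Rightarrow> 'v \<Rightarrow> real" where
  "st_demand s t d = (\<lambda>v. d * ((if v = s then 1 else 0) - (if v = t then 1 else 0)))"

text \<open>Normalized potential p^N(b): minimum entry over V equal to 0 (values outside V
  fixed to 0 so that it is a unique function).\<close>
definition pot_N ::
  "'v set \<Rightarrow> 'e set \<Rightarrow> ('e \<Rightarrow> 'v) \<Rightarrow> ('e \<Rightarrow> 'v) \<Rightarrow> ('e \<Rightarrow> real) \<Rightarrow> real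
    \<Rightarrow> ('v \<Rightarrow> real) \<Rightarrow> ('v \<Rightarrow> real)" where
  "pot_N V A tail head beta r b = (THE p. (\<exists>f. pb_transshipment V A tail head beta r b p f) \<and>
       Min (p ` V) = 0 \<and> (\<forall>v. v \<notin> V \<longrightarrow> p v = 0))"

definition eff_resistance ::
  "'v set \<Rightarrow> 'e set \<Rightarrow> ('e \<Rightarrow> 'v) \<Rightarrow> ('e \<Rightarrow> 'v) \<Rightarrow> ('e \<Rightarrow> real) \<Rightarrow> real
    \<Rightarrow> 'v \<Rightarrow> 'v \<Rightarrow> real" where
  "eff_resistance V A tail head beta r s t =
     (let p = pot_N V A tail head beta r (st_demand s t 1) in p s - p t)"

definition eff_conductance ::
  "'v set \<Rightarrow> 'e set \<Rightarrow> ('e \<Rightarrow> 'v) \<Rightarrow> ('e \<Rightarrow> 'v) \<Rightarrow> ('e \<Rightarrow> real) \<Rightarrow> real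
    \<Rightarrow> 'v \<Rightarrow> 'v \<Rightarrow> real" where
  "eff_conductance V A tail head beta r s t = (eff_resistance V A tail head beta r s t) powr (- 1 / r)"

definition multipath :: "nat \<Rightarrow> 'e set \<Rightarrow> ('e \<Rightarrow> nat) \<Rightarrow> ('e \<Rightarrow> nat) \<Rightarrow> bool" where
  "multipath k A tail head \<longleftrightarrow>
     (\<forall>a\<in>A. \<exists>i\<in>{1..k}. (tail a = i - 1 \<and> head a = i) \<or> (tail a = i \<and> head a = i - 1))"

end

theory Submission
  imports Defs
begin
lemma energy:
  fixes f p b :: "_ \<Rightarrow> real"
  assumes fA: "finite A" and fV: "finite V" and inV: "\<forall>a\<in>A. tail a \<in> V \<and> head a \<in> V"
    and cons: "\<forall>v\<in>V. (\<Sum>a\<in>{a\<in>A. tail a = v}. f a) - (\<Sum>a\<in>{a\<in>A. head a = v}. f a) = b v"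
  shows "(\<Sum>a\<in>A. f a * (p (tail a) - p (head a))) = (\<Sum>v\<in>V. p v * b v)"
proof -
  have g1: "(\<Sum>v\<in>V. \<Sum>a\<in>{a\<in>A. tail a = v}. p (tail a) * f a) = (\<Sum>a\<in>A. p (tail a) * f a)"
    by (rule sum.group) (use fA fV inV in auto)
  have g2: "(\<Sum>v\<in>V. \<Sum>a\<in>{a\<in>A. head a = v}. p (head a) * f a) = (\<Sum>a\<in>A. p (head a) * f a)"
    by (rule sum.group) (use fA fV inV in auto)
  have "(\<Sum>v\<in>V. p v * b v) = (\<Sum>v\<in>V. p v * ((\<Sum>a\<in>{a\<in>A. tail a = v}. f a) - (\<Sum>a\<in>{a\<in>A. head a = v}. f a)))"
    using cons by simp
  also have "\<dots> = (\<Sum>v\<in>V. (\<Sum>a\<in>{a\<in>A. tail a = v}. p (tail a) * f a) - (\<Sum>a\<in>{a\<in>A. head a = v}. p (head a) * f a))"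
  proof (rule sum.cong)
    fix v assume "v \<in> V"
    have "(\<Sum>a\<in>{a\<in>A. tail a = v}. p (tail a) * f a) = (\<Sum>a\<in>{a\<in>A. tail a = v}. p v * f a)"
      by (rule sum.cong) auto
    moreover have "(\<Sum>a\<in>{a\<in>A. head a = v}. p (head a) * f a) = (\<Sum>a\<in>{a\<in>A. head a = v}. p v * f a)"
      by (rule sum.cong) auto
    ultimately show "p v * ((\<Sum>a\<in>{a\<in>A. tail a = v}. f a) - (\<Sum>a\<in>{a\<in>A. head a = v}. f a)) =
      (\<Sum>a\<in>{a\<in>A. tail a = v}. p (tail a) * f a) - (\<Sum>a\<in>{a\<in>A. head a = v}. p (head a) * f a)"
      by (simp only: right_diff_distrib sum_distrib_left)
  qed simp
  also have "\<dots> = (\<Sum>a\<in>A. p (tail a) * f a) - (\<Sum>a\<in>A. p (head a) * f a)"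
    by (simp only: sum_subtractf g1 g2)
  also have "\<dots> = (\<Sum>a\<in>A. f a * (p (tail a) - p (head a)))"
    by (simp add: sum_subtractf[symmetric] algebra_simps)
  finally show ?thesis by simp
qed

definition phi :: "real \<Rightarrow> real \<Rightarrow> real" where "phi r x = sgn x * \<bar>x\<bar> powr r"

lemma phi_mono: assumes "r > 0" "x < y" shows "phi r x < phi r y"
proof -
  consider "0 \<le> x" | "x < 0" "0 \<le> y" | "y < 0" using assms by linarith
  then show ?thesis
  proof cases
    case 1
    then have "x powr r < y powr r" using assms by (intro powr_less_mono2) auto
    then show ?thesis using 1 assms by (auto simp: phi_def sgn_if)
  next
    case 2
    have "(-x) powr r > 0" using 2 by simp
    moreover have "phi r x = -((-x) powr r)" using 2 by (simp add: phi_def)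
    moreover have "phi r y \<ge> 0" using 2 by (simp add: phi_def sgn_if)
    ultimately show ?thesis by linarith
  next
    case 3
    then have "(-y) powr r < (-x) powr r" using assms by (intro powr_less_mono2) auto
    then show ?thesis using 3 assms by (auto simp: phi_def sgn_if)
  qed
qed

lemma phi_prod: assumes "r > 0" shows "(x - y) * (phi r x - phi r y) \<ge> 0"
  and "(x - y) * (phi r x - phi r y) = 0 \<Longrightarrow> x = y"
proof -
  have "x < y \<Longrightarrow> (x - y) * (phi r x - phi r y) > 0" using phi_mono[OF assms, of x y]
    by (simp add: mult_neg_neg)
  moreover have "y < x \<Longrightarrow> (x - y) * (phi r x - phi r y) > 0" using phi_mono[OF assms, of y x]
    by simp
  ultimately show "(x - y) * (phi r x - phi r y) \<ge> 0"
    and "(x - y) * (phi r x - phi r y) = 0 \<Longrightarrow> x = y"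
    by (cases "x < y"; cases "y < x"; force)+
qed

lemma pb_unique:
  assumes N: "pb_network V A tail head beta r"
    and T1: "pb_transshipment V A tail head beta r b p1 f1"
    and T2: "pb_transshipment V A tail head beta r b p2 f2"
  shows "\<exists>c. \<forall>v\<in>V. p1 v = p2 v + c"
proof -
  define g where "g v = p1 v - p2 v" for v
  define h where "h a = f1 a - f2 a" for a
  have fA: "finite A" and fV: "finite V" and inV: "\<forall>a\<in>A. tail a \<in> V \<and> head a \<in> V"
    and bpos: "\<forall>a\<in>A. beta a > 0" and rpos: "r > 0" and Vne: "V \<noteq> {}"
    and conn: "\<forall>u\<in>V. \<forall>v\<in>V. (u, v) \<in> ({(tail a, head a) | a. a \<in> A} \<union> {(head a, tail a) | a. a \<in> A})\<^sup>*"
    using N unfolding pb_network_def by auto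
  have cons: "\<forall>v\<in>V. (\<Sum>a\<in>{a\<in>A. tail a = v}. h a) - (\<Sum>a\<in>{a\<in>A. head a = v}. h a) = 0"
  proof
    fix v assume v: "v \<in> V"
    have "(\<Sum>a\<in>{a\<in>A. tail a = v}. f1 a) - (\<Sum>a\<in>{a\<in>A. head a = v}. f1 a) = b v"
         "(\<Sum>a\<in>{a\<in>A. tail a = v}. f2 a) - (\<Sum>a\<in>{a\<in>A. head a = v}. f2 a) = b v"
      using T1 T2 v unfolding pb_transshipment_def by auto
    then show "(\<Sum>a\<in>{a\<in>A. tail a = v}. h a) - (\<Sum>a\<in>{a\<in>A. head a = v}. h a) = 0"
      unfolding h_def sum_subtractf by linarith
  qed
  have E: "(\<Sum>a\<in>A. h a * (g (tail a) - g (head a))) = (\<Sum>v\<in>V. g v * 0)"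
    by (rule energy[OF fA fV inV cons])
  have arc: "g (tail a) - g (head a) = beta a * (phi r (f1 a) - phi r (f2 a))" if "a \<in> A" for a
    using T1 T2 that unfolding pb_transshipment_def g_def phi_def by (auto simp: algebra_simps)
  have tm: "h a * (g (tail a) - g (head a)) = beta a * ((f1 a - f2 a) * (phi r (f1 a) - phi r (f2 a)))"
    if "a \<in> A" for a using arc[OF that] unfolding h_def by simp
  have nn: "\<forall>a\<in>A. h a * (g (tail a) - g (head a)) \<ge> 0"
    using tm bpos phi_prod(1)[OF rpos] by (simp add: mult_nonneg_nonneg less_imp_le)
  have z: "\<forall>a\<in>A. h a * (g (tail a) - g (head a)) = 0"
  proof -
    have "(\<Sum>a\<in>A. h a * (g (tail a) - g (head a))) = 0" using E by simp
    moreover have "((\<Sum>a\<in>A. h a * (g (tail a) - g (head a))) = 0) = (\<forall>a\<in>A. h a * (g (tail a) - g (head a)) = 0)"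
      by (rule sum_nonneg_eq_0_iff[OF fA]) (use nn in auto)
    ultimately show ?thesis by (simp only:)
  qed
  have eq: "g (tail a) = g (head a)" if "a \<in> A" for a
  proof -
    have "(f1 a - f2 a) * (phi r (f1 a) - phi r (f2 a)) = 0"
    proof -
      have "h a * (g (tail a) - g (head a)) = 0" using z that by blast
      then have "beta a * ((f1 a - f2 a) * (phi r (f1 a) - phi r (f2 a))) = 0"
        using tm[OF that] by metis
      then show ?thesis using bpos that by (metis mult_eq_0_iff less_irrefl)
    qed
    then have "f1 a = f2 a" by (rule phi_prod(2)[OF rpos])
    then show ?thesis using arc[OF that] by simp
  qed
  have path: "g u = g v" if "(u, v) \<in> ({(tail a, head a) | a. a \<in> A} \<union> {(head a, tail a) | a. a \<in> A})\<^sup>*" for u v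
    using that
  proof (induction rule: rtrancl_induct)
    case base then show ?case by simp
  next
    case (step y z) then show ?case using eq by auto
  qed
  obtain v0 where v0: "v0 \<in> V" using Vne by auto
  show ?thesis
  proof (intro exI ballI)
    fix v assume "v \<in> V"
    then have "g v = g v0" using path conn v0 by blast
    then show "p1 v = p2 v + g v0" unfolding g_def by simp
  qed
qed

lemma pot_N_eq:
  assumes N: "pb_network V A tail head beta r"
    and T: "pb_transshipment V A tail head beta r b q g"
    and M: "Min (q ` V) = 0" and O: "\<forall>v. v \<notin> V \<longrightarrow> q v = 0"
  shows "pot_N V A tail head beta r b = q"
  unfolding pot_N_def
proof (rule the_equality)
  show "(\<exists>f. pb_transshipment V A tail head beta r b q f) \<and> Min (q ` V) = 0 \<and> (\<forall>v. v \<notin> V \<longrightarrow> q v = 0)"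
    using T M O by blast
next
  fix p assume P: "(\<exists>f. pb_transshipment V A tail head beta r b p f) \<and> Min (p ` V) = 0 \<and> (\<forall>v. v \<notin> V \<longrightarrow> p v = 0)"
  then obtain f' where T': "pb_transshipment V A tail head beta r b p f'" by blast
  obtain c where c: "\<forall>v\<in>V. p v = q v + c" using pb_unique[OF N T' T] by blast
  have fV: "finite V" and Vne: "V \<noteq> {}" using N unfolding pb_network_def by auto
  have "Min (q ` V) \<in> q ` V" using fV Vne by (intro Min_in) auto
  then obtain v1 where v1: "v1 \<in> V" "q v1 = 0" using M by auto
  have "Min (p ` V) \<in> p ` V" using fV Vne by (intro Min_in) auto
  then obtain v2 where v2: "v2 \<in> V" "p v2 = 0" using P by auto
  have "Min (p ` V) \<le> p v1" using fV v1 by (intro Min_le) auto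
  then have c1: "c \<ge> 0" using P c v1 by auto
  have "Min (q ` V) \<le> q v2" using fV v2 by (intro Min_le) auto
  then have c2: "c \<le> 0" using M c v2 by force
  have "c = 0" using c1 c2 by simp
  then show "p = q" using c P O by (intro ext) (metis add.right_neutral)
qed

theorem lemma3:
  fixes k :: nat and A :: "'e set" and tail head :: "'e \<Rightarrow> nat" and beta :: "'e \<Rightarrow> real"
    and r d pibar :: real and pot :: "nat \<Rightarrow> real" and f :: "'e \<Rightarrow> real"
  assumes "r > 0" and "k \<ge> 1"
    and "pb_network {0..k} A tail head beta r"
    and "multipath k A tail head"
    and "pb_transshipment {0..k} A tail head beta r (st_demand 0 k d) pot f"
    and "d > 0"
    and "pibar > 0"
    and "\<forall>v\<in>{0..k}. 0 \<le> pot v \<and> pot v \<le> pibar"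
  shows "eff_conductance {0..k} A tail head beta r 0 k \<ge> d / (pibar powr (1 / r))"
proof -
  note rpos = assms(1) and N = assms(3) and T = assms(5) and dpos = assms(6)
  define V where "V = {0..k}"
  have fA: "finite A" and fV: "finite V" and inV: "\<forall>a\<in>A. tail a \<in> V \<and> head a \<in> V"
    and bpos: "\<forall>a\<in>A. beta a > 0" and Vne: "V \<noteq> {}"
    using N unfolding pb_network_def V_def by auto
  have arcT: "\<forall>a\<in>A. pot (tail a) - pot (head a) = beta a * (sgn (f a) * \<bar>f a\<bar> powr r)"
    and consT: "\<forall>v\<in>V. (\<Sum>a\<in>{a\<in>A. tail a = v}. f a) - (\<Sum>a\<in>{a\<in>A. head a = v}. f a) = st_demand 0 k d v"
    using T unfolding pb_transshipment_def V_def by auto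
  have k0: "k \<noteq> 0" using assms(2) by simp
  have V0: "0 \<in> V" and Vk: "k \<in> V" unfolding V_def by auto
  define D where "D = pot 0 - pot k"
  have En: "(\<Sum>a\<in>A. f a * (pot (tail a) - pot (head a))) = (\<Sum>v\<in>V. pot v * st_demand 0 k d v)"
    by (rule energy[OF fA fV inV consT])
  have "(\<Sum>v\<in>V. pot v * st_demand 0 k d v) = (\<Sum>v\<in>V. (if v = 0 then d * pot 0 else 0) - (if v = k then d * pot k else 0))"
    by (rule sum.cong) (auto simp: st_demand_def k0)
  also have "\<dots> = d * D" using V0 Vk fV by (simp add: sum_subtractf D_def algebra_simps)
  finally have En2: "(\<Sum>a\<in>A. f a * (pot (tail a) - pot (head a))) = d * D" using En by simp
  have termeq: "f a * (pot (tail a) - pot (head a)) = beta a * (\<bar>f a\<bar> * \<bar>f a\<bar> powr r)" if "a \<in> A" for a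
    using arcT that by (auto simp: sgn_if)
  have tnn: "\<forall>a\<in>A. f a * (pot (tail a) - pot (head a)) \<ge> 0"
    using termeq bpos by (simp add: less_imp_le)
  have "\<exists>a\<in>A. f a \<noteq> 0"
  proof (rule ccontr)
    assume "\<not> ?thesis"
    then have "\<forall>a\<in>A. f a = 0" by blast
    then have "(\<Sum>a\<in>{a\<in>A. tail a = 0}. f a) - (\<Sum>a\<in>{a\<in>A. head a = 0}. f a) = 0" by simp
    moreover have "st_demand 0 k d 0 = d" by (simp add: st_demand_def k0)
    ultimately show False using consT V0 dpos by simp
  qed
  then obtain a0 where a0: "a0 \<in> A" "f a0 \<noteq> 0" by blast
  have "f a0 * (pot (tail a0) - pot (head a0)) > 0"
    using termeq[OF a0(1)] bpos a0 by simp
  moreover have "f a0 * (pot (tail a0) - pot (head a0)) \<le> (\<Sum>a\<in>A. f a * (pot (tail a) - pot (head a)))"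
    using tnn a0 fA by (intro member_le_sum) auto
  ultimately have "d * D > 0" using En2 by simp
  then have Dpos: "D > 0" using dpos by (simp add: zero_less_mult_iff)
  have Dle: "D \<le> pibar"
  proof -
    have "pot 0 \<le> pibar" "0 \<le> pot k" using assms(8) by auto
    then show ?thesis unfolding D_def by linarith
  qed
  define c where "c = d powr r"
  have cpos: "c > 0" unfolding c_def using dpos by simp
  define m where "m = Min ((\<lambda>v. pot v / c) ` V)"
  define q where "q v = (if v \<in> V then pot v / c - m else 0)" for v
  define g where "g a = f a / d" for a
  have Tq: "pb_transshipment V A tail head beta r (st_demand 0 k 1) q g"
    unfolding pb_transshipment_def
  proof (intro conjI ballI)
    fix a assume a: "a \<in> A"
    have "q (tail a) - q (head a) = (pot (tail a) - pot (head a)) / c"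
      using inV a unfolding q_def by (simp add: diff_divide_distrib)
    also have "\<dots> = beta a * (sgn (f a) * \<bar>f a\<bar> powr r) / c" using arcT a by simp
    also have "\<dots> = beta a * (sgn (g a) * \<bar>g a\<bar> powr r)"
      unfolding g_def c_def using dpos by (simp add: sgn_divide abs_divide powr_divide)
    finally show "q (tail a) - q (head a) = beta a * (sgn (g a) * \<bar>g a\<bar> powr r)" .
  next
    fix v assume v: "v \<in> V"
    have "(\<Sum>a\<in>{a\<in>A. tail a = v}. g a) - (\<Sum>a\<in>{a\<in>A. head a = v}. g a)
        = ((\<Sum>a\<in>{a\<in>A. tail a = v}. f a) - (\<Sum>a\<in>{a\<in>A. head a = v}. f a)) / d"
      unfolding g_def by (simp add: sum_divide_distrib diff_divide_distrib)
    also have "\<dots> = st_demand 0 k d v / d" using consT v by simp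
    also have "\<dots> = st_demand 0 k 1 v" using dpos by (simp add: st_demand_def)
    finally show "(\<Sum>a\<in>{a\<in>A. tail a = v}. g a) - (\<Sum>a\<in>{a\<in>A. head a = v}. g a) = st_demand 0 k 1 v" .
  qed
  have "m \<in> (\<lambda>v. pot v / c) ` V" unfolding m_def using fV Vne by (intro Min_in) auto
  then obtain vm where vm: "vm \<in> V" "pot vm / c = m" by auto
  have mle: "m \<le> pot v / c" if "v \<in> V" for v unfolding m_def using fV that by (intro Min_le) auto
  have Mq: "Min (q ` V) = 0"
  proof (rule Min_eqI)
    show "finite (q ` V)" using fV by simp
    show "\<And>y. y \<in> q ` V \<Longrightarrow> 0 \<le> y" using mle unfolding q_def by auto
    show "0 \<in> q ` V" using vm unfolding q_def by force
  qed
  have Oq: "\<forall>v. v \<notin> V \<longrightarrow> q v = 0" unfolding q_def by simp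
  have PN: "pot_N V A tail head beta r (st_demand 0 k 1) = q"
    by (rule pot_N_eq[OF N[folded V_def] Tq Mq Oq])
  have R: "eff_resistance V A tail head beta r 0 k = D / c"
    unfolding eff_resistance_def PN Let_def q_def D_def using V0 Vk by (simp add: diff_divide_distrib)
  have "eff_conductance V A tail head beta r 0 k = (D / c) powr (- 1 / r)"
    unfolding eff_conductance_def R ..
  also have "\<dots> = 1 / (D / c) powr (1 / r)"
    using Dpos cpos by (simp add: powr_minus_divide)
  also have "(D / c) powr (1 / r) = D powr (1 / r) / d"
    using Dpos cpos dpos rpos unfolding c_def by (simp add: powr_divide powr_powr)
  also have "1 / (D powr (1 / r) / d) = d / D powr (1 / r)" by simp
  also have "\<dots> \<ge> d / pibar powr (1 / r)"
  proof -
    have "D powr (1 / r) \<le> pibar powr (1 / r)" using Dpos Dle rpos by (intro powr_mono2) auto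
    moreover have "D powr (1 / r) > 0" using Dpos by simp
    moreover have "pibar powr (1 / r) > 0" using assms(7) by simp
    ultimately show ?thesis using dpos by (intro divide_left_mono) (auto intro: mult_pos_pos)
  qed
  finally show ?thesis unfolding V_def .
qed

end
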